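(* Let $k\ge1$ and let $\mathbf{G}\in\mathbb{F}_2^{k\times(2^k-1)}$ be a generator matrix of the $[2^k-1,k,2^{k-1}]_2$ binary simplex code, i.e. its columns are all the nonzero vectors of $\mathbb{F}_2^k$ (each exactly once). For each $i\in[k]$ let the recovery sets of file $f_i$ be all recovery sets of size $1$ or $2$. Then the graph representation of this code is a bipartite graph.
   Context: Let $\mathbf{g}_1,\dots,\mathbf{g}_n$ ($n=2^k-1$) be the columns of $\mathbf{G}$ and $\mathbf{e}_i$ the $i$-th unit vector of $\mathbb{F}_2^k$. Here the recovery sets of size at most 2 for file $f_i$ are the sets $\{r\}$ with $\mathbf{g}_r=\mathbf{e}_i$ and the sets $\{a,b\}$, $a\neq b$, with $\mathbf{g}_a+\mathbf{g}_b=\mathbf{e}_i$. The graph representation is the (multi)graph whose vertex set is $[n]$ together with one new dummy vertex for each recovery set of size 1, and which has one edge per recovery set: a size-2 recovery set $\{a,b\}$ gives an edge between $a$ and $b$, and a size-1 recovery set $\{r\}$ gives an edge between $r$ and its dummy vertex. *)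

theory Defs
  imports Main
begin

text \<open>Vectors of F_2^k are represented as subsets of {1..k} (their supports);
  addition in F_2^k is symmetric difference, the unit vector e_i is {i}.
  A k x n binary matrix is represented by its columns g :: nat => nat set,
  g j being the column j (j in {1..n}).\<close>

definition vadd :: "nat set \<Rightarrow> nat set \<Rightarrow> nat set" where
  "vadd u v = (u - v) \<union> (v - u)"

definition unitv :: "nat \<Rightarrow> nat set" where
  "unitv i = {i}"

definition simplex_generator :: "nat \<Rightarrow> (nat \<Rightarrow> nat set) \<Rightarrow> bool" where
  "simplex_generator k g \<longleftrightarrow>
     bij_betw g {1..2^k - 1} {S. S \<subseteq> {1..k} \<and> S \<noteq> {}}"

definition recovery_sets :: "nat \<Rightarrow> (nat \<Rightarrow> nat set) \<Rightarrow> nat \<Rightarrow> nat set set" where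
  "recovery_sets n g i =
     {{r} | r. r \<in> {1..n} \<and> g r = unitv i} \<union>
     {{a, b} | a b. a \<in> {1..n} \<and> b \<in> {1..n} \<and> a \<noteq> b \<and> vadd (g a) (g b) = unitv i}"

datatype vertex = Col nat | Dummy nat nat  (* Dummy i r: dummy vertex of size-1 recovery set {r} of file i *)

definition graph_vertices :: "nat \<Rightarrow> nat \<Rightarrow> (nat \<Rightarrow> nat set) \<Rightarrow> vertex set" where
  "graph_vertices k n g =
     Col ` {1..n} \<union> {Dummy i r | i r. i \<in> {1..k} \<and> {r} \<in> recovery_sets n g i}"

definition graph_edges :: "nat \<Rightarrow> nat \<Rightarrow> (nat \<Rightarrow> nat set) \<Rightarrow> (nat \<times> nat set) set" where
  "graph_edges k n g = {(i, R). i \<in> {1..k} \<and> R \<in> recovery_sets n g i}"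

definition edge_ends :: "nat \<times> nat set \<Rightarrow> vertex \<times> vertex" where
  "edge_ends e = (case e of (i, R) \<Rightarrow>
     if card R = 1 then (Col (the_elem R), Dummy i (the_elem R))
     else (Col (Min R), Col (Max R)))"

definition bipartite :: "'v set \<Rightarrow> 'e set \<Rightarrow> ('e \<Rightarrow> 'v \<times> 'v) \<Rightarrow> bool" where
  "bipartite V E ends \<longleftrightarrow>
     (\<exists>A B. A \<inter> B = {} \<and> A \<union> B = V \<and>
        (\<forall>e\<in>E. (fst (ends e) \<in> A \<and> snd (ends e) \<in> B) \<or>
               (fst (ends e) \<in> B \<and> snd (ends e) \<in> A)))"

end

theory Submission
  imports Defs
begin

lemma parity_vadd:
  assumes "finite u" "finite v" "vadd u v = {i}"
  shows "odd (card u) \<longleftrightarrow> even (card v)"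
proof -
  have d: "(u - v) \<inter> (v - u) = {}" by blast
  have "card (u - v) + card (v - u) = 1"
    using assms card_Un_disjoint[OF _ _ d] unfolding vadd_def by auto
  moreover have "card u = card (u \<inter> v) + card (u - v)"
    using assms(1) by (metis Int_Diff_disjoint Int_Diff_Un card_Un_disjoint finite_Diff finite_Int)
  moreover have "card v = card (u \<inter> v) + card (v - u)"
    using assms(2) by (metis Int_Diff_disjoint Int_Diff_Un card_Un_disjoint finite_Diff finite_Int inf_commute)
  ultimately show ?thesis by presburger
qed

theorem theorem3:
  fixes k :: nat and g :: "nat \<Rightarrow> nat set"
  assumes "k \<ge> 1"
    and "simplex_generator k g"
  shows "bipartite (graph_vertices k (2^k - 1) g) (graph_edges k (2^k - 1) g) edge_ends"
proof -
  let ?n = "2^k - 1 :: nat"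
  let ?V = "graph_vertices k ?n g"
  have fin: "finite (g j)" if "j \<in> {1..?n}" for j
  proof -
    have "g j \<in> {S. S \<subseteq> {1..k} \<and> S \<noteq> {}}"
      using assms(2) that unfolding simplex_generator_def bij_betw_def by blast
    thus ?thesis using finite_subset by blast
  qed
  define A where "A = {v \<in> ?V. case v of Col j \<Rightarrow> odd (card (g j)) | Dummy _ _ \<Rightarrow> False}"
  define B where "B = ?V - A"
  have "\<forall>e\<in>graph_edges k ?n g. (fst (edge_ends e) \<in> A \<and> snd (edge_ends e) \<in> B) \<or>
               (fst (edge_ends e) \<in> B \<and> snd (edge_ends e) \<in> A)"
  proof
    fix e assume e: "e \<in> graph_edges k ?n g"
    then obtain i R where eq: "e = (i, R)" and i: "i \<in> {1..k}" and R: "R \<in> recovery_sets ?n g i"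
      unfolding graph_edges_def by blast
    from R consider (one) r where "R = {r}" "r \<in> {1..?n}" "g r = unitv i"
      | (two) a b where "R = {a,b}" "a \<in> {1..?n}" "b \<in> {1..?n}" "a \<noteq> b" "vadd (g a) (g b) = unitv i"
      unfolding recovery_sets_def by blast
    then show "(fst (edge_ends e) \<in> A \<and> snd (edge_ends e) \<in> B) \<or>
               (fst (edge_ends e) \<in> B \<and> snd (edge_ends e) \<in> A)"
    proof cases
      case one
      have ee: "edge_ends e = (Col r, Dummy i r)" using one eq by (simp add: edge_ends_def)
      have "Col r \<in> ?V" using one unfolding graph_vertices_def by auto
      moreover have "Dummy i r \<in> ?V" using one i R unfolding graph_vertices_def by auto
      ultimately show ?thesis using one ee unfolding A_def B_def by (simp add: unitv_def)
    next
      case two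
      have ca: "Col a \<in> ?V" "Col b \<in> ?V" using two unfolding graph_vertices_def by auto
      have par: "odd (card (g a)) \<longleftrightarrow> even (card (g b))"
        using parity_vadd[OF fin[OF two(2)] fin[OF two(3)]] two(5) by (simp add: unitv_def)
      have "card R \<noteq> 1" using two by simp
      hence ee: "edge_ends e = (Col (Min R), Col (Max R))" using eq by (simp add: edge_ends_def)
      have "(Min R = a \<and> Max R = b) \<or> (Min R = b \<and> Max R = a)"
        using two by (cases "a < b") (auto simp: min_def max_def)
      then show ?thesis using ee ca par unfolding A_def B_def by auto
    qed
  qed
  moreover have "A \<inter> B = {}" "A \<union> B = ?V" unfolding A_def B_def by auto
  ultimately show ?thesis unfolding bipartite_def by blast
qed

end
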